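(* Under the standing setup with $\mathrm{Var}(X_N)>0$, the following bounds on $Y^0$ hold and each is sharp under its stated sign assumptions (absent additional information): (1) if $\delta_B\ge0$: $Y^0\in[Y^{0-}_{MOB},Y^0_{NM}]$; if $\delta_B\le0$: $Y^0\in[Y^0_{NM},Y^{0+}_{MOB}]$; (2) if $\delta_W\ge0$: $Y^0\in[\max\{Y^0_{ER},Y^{0-}_{MOB}\},Y^{0+}_{MOB}]$; if $\delta_W\le0$: $Y^0\in[Y^{0-}_{MOB},\min\{Y^0_{ER},Y^{0+}_{MOB}\}]$; (3) if $\delta_W\ge0$ and $\delta_B\ge0$: $\max\{Y^0_{ER},Y^{0-}_{MOB}\}\le Y^0\le Y^0_{NM}$; if $\delta_W\le0$ and $\delta_B\le0$: $Y^0_{NM}\le Y^0\le\min\{Y^0_{ER},Y^{0+}_{MOB}\}$; (4) if $\delta_W\ge0$ and $\delta_B\le0$: $Y^0\in[\max\{Y^{0-}_{MOB},Y^0_{ER},Y^0_{NM}\},Y^{0+}_{MOB}]$; if $\delta_W\le0$ and $\delta_B\ge0$: $Y^0\in[Y^{0-}_{MOB},\min\{Y^0_{NM},Y^0_{ER},Y^{0+}_{MOB}\}]$; (5) if $\delta_W=0$ then $Y^0=Y^0_{ER}$; if $\delta_B=0$ then $Y^0=Y^0_{NM}$; if $\delta_W=\delta_B=0$ then $Y^0=Y^1$.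
   Context: Let $(X,Y,N)$ be a random triple with $X\in\{0,1\}$, $Y$ real-valued, $N$ taking values in a finite set $\mathcal N$. Write $p_n=\Pr(N=n)$, $X_n=\mathbb E[X\mid N=n]$, $Y_n=\mathbb E[Y\mid N=n]$, $X_N=\mathbb E[X\mid N]$, $Y_N=\mathbb E[Y\mid N]$. Assume some $n$ has $p_n>0$ and $X_n\in(0,1)$, and fix reals $\underline Y\le\overline Y$ with $\mathbb E[Y\mid X=x,N=n]\in[\underline Y,\overline Y]$ whenever $\Pr(X=x,N=n)>0$. $Y^x=\mathbb E[Y\mid X=x]$; $\delta_B=\mathbb E[\mathrm{Cov}(Y,X\mid N)]$; $\delta_W=\mathbb E[\mathrm{Cov}(Y,X_N\mid X)]$; $D_{ER}=\mathrm{Cov}(Y_N,X_N)/\mathrm{Var}(X_N)$; $Y^0_{ER}=\mathbb E[Y_N]-D_{ER}\,\mathbb E[X_N]$; $Y^0_{NM}=\mathbb E[(1-X_N)Y_N]/\mathbb E[1-X_N]$; $Y^{0-}_{MOB}=\mathbb E[\max\{Y_N-\overline Y X_N,\underline Y(1-X_N)\}]/(1-\mathbb E[X])$; $Y^{0+}_{MOB}=\mathbb E[\min\{Y_N-\underline Y X_N,\overline Y(1-X_N)\}]/(1-\mathbb E[X])$. Sharpness under an assumption $\mathcal A$: the parameter lies in the interval for every joint distribution satisfying the standing assumptions and $\mathcal A$, and every value in the interval is attained by some joint distribution of $(X,Y,N)$ with the same observed $(p_n,X_n,Y_n)_n$, satisfying the standing bound and $\mathcal A$. *)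

theory Defs
  imports "HOL-Probability.Probability"
begin

text \<open>A joint distribution of (X,Y,N) is a probability measure on the outcome
  space bool \<times> real \<times> 'n (X = first, Y = second, N = third component),
  with the product sigma algebra.\<close>

type_synonym 'n outcome = "bool \<times> real \<times> 'n"

definition Xv :: "'n outcome \<Rightarrow> real" where
  "Xv \<omega> = (if fst \<omega> then 1 else 0)"

definition Yv :: "'n outcome \<Rightarrow> real" where
  "Yv \<omega> = fst (snd \<omega>)"

definition Nv :: "'n outcome \<Rightarrow> 'n" where
  "Nv \<omega> = snd (snd \<omega>)"

definition cE :: "'n outcome measure \<Rightarrow> 'n outcome set \<Rightarrow> ('n outcome \<Rightarrow> real) \<Rightarrow> real" where
  "cE M A f = (\<integral>\<omega>. indicator A \<omega> * f \<omega> \<partial>M) / measure M A"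

definition cellN :: "'n \<Rightarrow> 'n outcome set" where
  "cellN n = {\<omega>. Nv \<omega> = n}"

definition cellX :: "bool \<Rightarrow> 'n outcome set" where
  "cellX x = {\<omega>. fst \<omega> = x}"

definition cellXN :: "bool \<Rightarrow> 'n \<Rightarrow> 'n outcome set" where
  "cellXN x n = {\<omega>. fst \<omega> = x \<and> Nv \<omega> = n}"

definition condN :: "'n outcome measure \<Rightarrow> ('n outcome \<Rightarrow> real) \<Rightarrow> 'n \<Rightarrow> real" where
  "condN M f n = cE M (cellN n) f"

definition condX :: "'n outcome measure \<Rightarrow> ('n outcome \<Rightarrow> real) \<Rightarrow> bool \<Rightarrow> real" where
  "condX M f x = cE M (cellX x) f"

definition pN :: "'n outcome measure \<Rightarrow> 'n \<Rightarrow> real" where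
  "pN M n = measure M (cellN n)"

definition XNn :: "'n outcome measure \<Rightarrow> 'n \<Rightarrow> real" where
  "XNn M n = condN M Xv n"

definition YNn :: "'n outcome measure \<Rightarrow> 'n \<Rightarrow> real" where
  "YNn M n = condN M Yv n"

definition XN :: "'n outcome measure \<Rightarrow> 'n outcome \<Rightarrow> real" where
  "XN M \<omega> = XNn M (Nv \<omega>)"

definition YN :: "'n outcome measure \<Rightarrow> 'n outcome \<Rightarrow> real" where
  "YN M \<omega> = YNn M (Nv \<omega>)"

definition obs :: "'n outcome measure \<Rightarrow> 'n \<Rightarrow> real \<times> real \<times> real" where
  "obs M n = (pN M n, XNn M n, YNn M n)"

definition EE :: "'n outcome measure \<Rightarrow> ('n outcome \<Rightarrow> real) \<Rightarrow> real" where
  "EE M f = (\<integral>\<omega>. f \<omega> \<partial>M)"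

definition standing :: "real \<Rightarrow> real \<Rightarrow> ('n::finite) outcome measure \<Rightarrow> bool" where
  "standing Ylo Yhi M \<longleftrightarrow>
     prob_space M \<and>
     sets M = sets (count_space UNIV \<Otimes>\<^sub>M (lborel \<Otimes>\<^sub>M count_space UNIV)) \<and>
     integrable M Yv \<and>
     (\<exists>n. pN M n > 0 \<and> 0 < XNn M n \<and> XNn M n < 1) \<and>
     (\<forall>x n. measure M (cellXN x n) > 0 \<longrightarrow>
        Ylo \<le> cE M (cellXN x n) Yv \<and> cE M (cellXN x n) Yv \<le> Yhi)"

definition Y0 :: "'n outcome measure \<Rightarrow> real" where
  "Y0 M = condX M Yv False"

definition Y1 :: "'n outcome measure \<Rightarrow> real" where
  "Y1 M = condX M Yv True"

definition deltaB :: "'n outcome measure \<Rightarrow> real" where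
  "deltaB M = EE M (\<lambda>\<omega>. condN M (\<lambda>\<omega>'. Yv \<omega>' * Xv \<omega>') (Nv \<omega>)
                        - condN M Yv (Nv \<omega>) * condN M Xv (Nv \<omega>))"

definition deltaW :: "'n outcome measure \<Rightarrow> real" where
  "deltaW M = EE M (\<lambda>\<omega>. condX M (\<lambda>\<omega>'. Yv \<omega>' * XN M \<omega>') (fst \<omega>)
                        - condX M Yv (fst \<omega>) * condX M (XN M) (fst \<omega>))"

definition VarXN :: "'n outcome measure \<Rightarrow> real" where
  "VarXN M = EE M (\<lambda>\<omega>. (XN M \<omega> - EE M (XN M))\<^sup>2)"

definition CovYNXN :: "'n outcome measure \<Rightarrow> real" where
  "CovYNXN M = EE M (\<lambda>\<omega>. (YN M \<omega> - EE M (YN M)) * (XN M \<omega> - EE M (XN M)))"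

definition D_ER :: "'n outcome measure \<Rightarrow> real" where
  "D_ER M = CovYNXN M / VarXN M"

definition Y0_ER :: "'n outcome measure \<Rightarrow> real" where
  "Y0_ER M = EE M (YN M) - D_ER M * EE M (XN M)"

definition Y0_NM :: "'n outcome measure \<Rightarrow> real" where
  "Y0_NM M = EE M (\<lambda>\<omega>. (1 - XN M \<omega>) * YN M \<omega>) / EE M (\<lambda>\<omega>. 1 - XN M \<omega>)"

definition Y0_MOB_lo :: "real \<Rightarrow> real \<Rightarrow> 'n outcome measure \<Rightarrow> real" where
  "Y0_MOB_lo Ylo Yhi M =
     EE M (\<lambda>\<omega>. max (YN M \<omega> - Yhi * XN M \<omega>) (Ylo * (1 - XN M \<omega>))) / (1 - EE M Xv)"

definition Y0_MOB_hi :: "real \<Rightarrow> real \<Rightarrow> 'n outcome measure \<Rightarrow> real" where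
  "Y0_MOB_hi Ylo Yhi M =
     EE M (\<lambda>\<omega>. min (YN M \<omega> - Ylo * XN M \<omega>) (Yhi * (1 - XN M \<omega>))) / (1 - EE M Xv)"

definition sharp_bound ::
  "real \<Rightarrow> real \<Rightarrow> (('n::finite) outcome measure \<Rightarrow> bool) \<Rightarrow> ('n outcome measure \<Rightarrow> real)
     \<Rightarrow> ('n outcome measure \<Rightarrow> real) \<Rightarrow> 'n outcome measure \<Rightarrow> bool" where
  "sharp_bound Ylo Yhi A lo hi M \<longleftrightarrow>
     (\<forall>M'. standing Ylo Yhi M' \<and> obs M' = obs M \<and> A M' \<longrightarrow> lo M' \<le> Y0 M' \<and> Y0 M' \<le> hi M') \<and>
     (\<forall>y. lo M \<le> y \<and> y \<le> hi M \<longrightarrow>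
        (\<exists>M'. standing Ylo Yhi M' \<and> obs M' = obs M \<and> A M' \<and> Y0 M' = y))"

end

theory Submission
  imports Defs
begin
definition aY0 :: "('n::finite \<Rightarrow> real) \<Rightarrow> ('n \<Rightarrow> real) \<Rightarrow> ('n \<Rightarrow> real) \<Rightarrow> real" where
  "aY0 p X c = (\<Sum>n\<in>UNIV. c n) / (\<Sum>n\<in>UNIV. p n * (1 - X n))"
definition aY1 :: "('n::finite \<Rightarrow> real) \<Rightarrow> ('n \<Rightarrow> real) \<Rightarrow> ('n \<Rightarrow> real) \<Rightarrow> ('n \<Rightarrow> real) \<Rightarrow> real" where
  "aY1 p X Y c = (\<Sum>n\<in>UNIV. p n * Y n - c n) / (\<Sum>n\<in>UNIV. p n * X n)"
definition adB :: "('n::finite \<Rightarrow> real) \<Rightarrow> ('n \<Rightarrow> real) \<Rightarrow> ('n \<Rightarrow> real) \<Rightarrow> ('n \<Rightarrow> real) \<Rightarrow> real" where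
  "adB p X Y c = (\<Sum>n\<in>UNIV. p n * ((p n * Y n - c n) / p n - Y n * X n))"
definition adW :: "('n::finite \<Rightarrow> real) \<Rightarrow> ('n \<Rightarrow> real) \<Rightarrow> ('n \<Rightarrow> real) \<Rightarrow> ('n \<Rightarrow> real) \<Rightarrow> real" where
  "adW p X Y c =
    ((\<Sum>n\<in>UNIV. X n * (p n * Y n - c n)) / (\<Sum>n\<in>UNIV. p n * X n)
      - (\<Sum>n\<in>UNIV. p n * Y n - c n) / (\<Sum>n\<in>UNIV. p n * X n) * ((\<Sum>n\<in>UNIV. X n * (p n * X n)) / (\<Sum>n\<in>UNIV. p n * X n)))
     * (\<Sum>n\<in>UNIV. p n * X n)
  + ((\<Sum>n\<in>UNIV. X n * c n) / (\<Sum>n\<in>UNIV. p n * (1 - X n))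
      - (\<Sum>n\<in>UNIV. c n) / (\<Sum>n\<in>UNIV. p n * (1 - X n)) * ((\<Sum>n\<in>UNIV. X n * (p n * (1 - X n))) / (\<Sum>n\<in>UNIV. p n * (1 - X n))))
     * (\<Sum>n\<in>UNIV. p n * (1 - X n))"
definition aV :: "('n::finite \<Rightarrow> real) \<Rightarrow> ('n \<Rightarrow> real) \<Rightarrow> real" where
  "aV p X = (\<Sum>n\<in>UNIV. p n * (X n - (\<Sum>k\<in>UNIV. p k * X k))\<^sup>2)"
definition aCov :: "('n::finite \<Rightarrow> real) \<Rightarrow> ('n \<Rightarrow> real) \<Rightarrow> ('n \<Rightarrow> real) \<Rightarrow> real" where
  "aCov p X Y = (\<Sum>n\<in>UNIV. p n * ((Y n - (\<Sum>k\<in>UNIV. p k * Y k)) * (X n - (\<Sum>k\<in>UNIV. p k * X k))))"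
definition aER :: "('n::finite \<Rightarrow> real) \<Rightarrow> ('n \<Rightarrow> real) \<Rightarrow> ('n \<Rightarrow> real) \<Rightarrow> real" where
  "aER p X Y = (\<Sum>k\<in>UNIV. p k * Y k) - aCov p X Y / aV p X * (\<Sum>k\<in>UNIV. p k * X k)"
definition aNM :: "('n::finite \<Rightarrow> real) \<Rightarrow> ('n \<Rightarrow> real) \<Rightarrow> ('n \<Rightarrow> real) \<Rightarrow> real" where
  "aNM p X Y = (\<Sum>n\<in>UNIV. p n * ((1 - X n) * Y n)) / (\<Sum>n\<in>UNIV. p n * (1 - X n))"
definition alo :: "real \<Rightarrow> real \<Rightarrow> ('n::finite \<Rightarrow> real) \<Rightarrow> ('n \<Rightarrow> real) \<Rightarrow> ('n \<Rightarrow> real) \<Rightarrow> real" where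
  "alo Ylo Yhi p X Y = (\<Sum>n\<in>UNIV. p n * max (Y n - Yhi * X n) (Ylo * (1 - X n))) / (1 - (\<Sum>n\<in>UNIV. p n * X n))"
definition ahi :: "real \<Rightarrow> real \<Rightarrow> ('n::finite \<Rightarrow> real) \<Rightarrow> ('n \<Rightarrow> real) \<Rightarrow> ('n \<Rightarrow> real) \<Rightarrow> real" where
  "ahi Ylo Yhi p X Y = (\<Sum>n\<in>UNIV. p n * min (Y n - Ylo * X n) (Yhi * (1 - X n))) / (1 - (\<Sum>n\<in>UNIV. p n * X n))"

definition wf :: "('n::finite \<Rightarrow> real) \<Rightarrow> ('n \<Rightarrow> real) \<Rightarrow> ('n \<Rightarrow> real) \<Rightarrow> bool" where
  "wf p X Y \<longleftrightarrow> (\<forall>n. 0 \<le> p n) \<and> (\<Sum>n\<in>UNIV. p n) = 1 \<and> (\<forall>n. 0 \<le> X n \<and> X n \<le> 1)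
     \<and> (\<forall>n. p n = 0 \<longrightarrow> X n = 0 \<and> Y n = 0) \<and> (\<exists>n. 0 < p n \<and> 0 < X n \<and> X n < 1)"

definition cb :: "real \<Rightarrow> real \<Rightarrow> ('n::finite \<Rightarrow> real) \<Rightarrow> ('n \<Rightarrow> real) \<Rightarrow> ('n \<Rightarrow> real) \<Rightarrow> ('n \<Rightarrow> real) \<Rightarrow> bool" where
  "cb Ylo Yhi p X Y c \<longleftrightarrow> (\<forall>n. Ylo * (p n * (1 - X n)) \<le> c n \<and> c n \<le> Yhi * (p n * (1 - X n))
     \<and> Ylo * (p n * X n) \<le> p n * Y n - c n \<and> p n * Y n - c n \<le> Yhi * (p n * X n))"

lemma max_mult_nonneg: "(p::real) \<ge> 0 \<Longrightarrow> p * max u v = max (p * u) (p * v)"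
  by (simp add: max_mult_distrib_left)
lemma min_mult_nonneg: "(p::real) \<ge> 0 \<Longrightarrow> p * min u v = min (p * u) (p * v)"
  by (simp add: min_mult_distrib_left)

lemma cb_iff:
  assumes "(p::real) \<ge> 0"
  shows "(Ylo * (p * (1 - X)) \<le> c \<and> c \<le> Yhi * (p * (1 - X)) \<and> Ylo * (p * X) \<le> p * Y - c \<and> p * Y - c \<le> Yhi * (p * X))
     \<longleftrightarrow> (p * max (Y - Yhi * X) (Ylo * (1 - X)) \<le> c \<and> c \<le> p * min (Y - Ylo * X) (Yhi * (1 - X)))"
  using assms by (simp add: max_mult_nonneg min_mult_nonneg algebra_simps) linarith

lemma aux: assumes "(c::real) * S - x = y * (S - A\<^sup>2)"
  shows "K * A - (E - c) * S - x = (y - E) * (S - A\<^sup>2) + (K - A * E) * A"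
proof -
  have "K * A - (E - c) * S - x - ((y - E) * (S - A\<^sup>2) + (K - A * E) * A) = (c * S - x) - y * (S - A\<^sup>2)"
    by (simp add: algebra_simps power2_eq_square)
  then show ?thesis using assms by simp
qed

lemma aux2: assumes "(V::real) > 0"
  shows "(y - (E - w / V * A)) * V = (y - E) * V + w * A"
proof -
  have "(y - (E - w / V * A)) * V = (y - E) * V + (w / V * V) * A" by (simp add: algebra_simps)
  then show ?thesis using assms by simp
qed

context
  fixes p X Y :: "'n::finite \<Rightarrow> real"
  assumes wf: "wf p X Y"
begin

lemma p_nn: "p n \<ge> 0" using wf wf_def by blast
lemma X01: "0 \<le> X n" "X n \<le> 1" using wf wf_def by blast+
lemma sum_p: "(\<Sum>n\<in>UNIV. p n) = 1" using wf wf_def by blast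
lemma p0: "p n = 0 \<Longrightarrow> X n = 0 \<and> Y n = 0" using wf wf_def by blast

lemma AB: "(\<Sum>n\<in>UNIV. p n * (1 - X n)) = 1 - (\<Sum>n\<in>UNIV. p n * X n)"
  using sum_p by (simp add: algebra_simps sum_subtractf)

lemma Apos: "(\<Sum>n\<in>UNIV. p n * X n) > 0"
proof -
  obtain n0 where n0: "0 < p n0" "0 < X n0" "X n0 < 1" using wf wf_def by blast
  have "p n0 * X n0 \<le> (\<Sum>n\<in>UNIV. p n * X n)"
    by (rule member_le_sum) (auto simp: p_nn X01)
  moreover have "p n0 * X n0 > 0" using n0 by simp
  ultimately show ?thesis by linarith
qed

lemma Bpos: "(\<Sum>n\<in>UNIV. p n * (1 - X n)) > 0"
proof -
  obtain n0 where n0: "0 < p n0" "0 < X n0" "X n0 < 1" using wf wf_def by blast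
  have "p n0 * (1 - X n0) \<le> (\<Sum>n\<in>UNIV. p n * (1 - X n))"
    by (rule member_le_sum) (auto simp: p_nn X01)
  moreover have "p n0 * (1 - X n0) > 0" using n0 by simp
  ultimately show ?thesis by linarith
qed

lemma S2_lt: "(\<Sum>n\<in>UNIV. p n * (X n)\<^sup>2) < (\<Sum>n\<in>UNIV. p n * X n)"
proof -
  obtain n0 where n0: "0 < p n0" "0 < X n0" "X n0 < 1" using wf wf_def by blast
  show ?thesis
  proof (rule sum_strict_mono_ex1)
    show "\<forall>n\<in>UNIV. p n * (X n)\<^sup>2 \<le> p n * X n"
      using p_nn X01 by (auto intro!: mult_left_mono simp: power2_eq_square mult_le_cancel_right1 mult_left_le)
    show "\<exists>n\<in>UNIV. p n * (X n)\<^sup>2 < p n * X n"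
      using n0 by (intro bexI[of _ n0]) (auto simp: power2_eq_square)
  qed simp
qed


lemma cbD: assumes "cb Ylo Yhi p X Y c"
  shows "p n * max (Y n - Yhi * X n) (Ylo * (1 - X n)) \<le> c n \<and> c n \<le> p n * min (Y n - Ylo * X n) (Yhi * (1 - X n))"
  using assms cb_iff[OF p_nn[of n]] unfolding cb_def by blast

lemma cbI: assumes "\<And>n. p n * max (Y n - Yhi * X n) (Ylo * (1 - X n)) \<le> c n \<and> c n \<le> p n * min (Y n - Ylo * X n) (Yhi * (1 - X n))"
  shows "cb Ylo Yhi p X Y c"
  using assms cb_iff[OF p_nn] unfolding cb_def by blast

lemma L1: assumes "cb Ylo Yhi p X Y c"
  shows "alo Ylo Yhi p X Y \<le> aY0 p X c \<and> aY0 p X c \<le> ahi Ylo Yhi p X Y"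
proof -
  have "(\<Sum>n\<in>UNIV. p n * max (Y n - Yhi * X n) (Ylo * (1 - X n))) \<le> (\<Sum>n\<in>UNIV. c n)"
    by (rule sum_mono) (use cbD[OF assms] in blast)
  moreover have "(\<Sum>n\<in>UNIV. c n) \<le> (\<Sum>n\<in>UNIV. p n * min (Y n - Ylo * X n) (Yhi * (1 - X n)))"
    by (rule sum_mono) (use cbD[OF assms] in blast)
  ultimately show ?thesis using Bpos
    unfolding alo_def ahi_def aY0_def AB by (simp add: divide_right_mono)
qed

lemma Ybounds: assumes "cb Ylo Yhi p X Y c" shows "Ylo * p n \<le> p n * Y n \<and> p n * Y n \<le> Yhi * p n"
proof -
  have h: "Ylo * (p n * (1 - X n)) \<le> c n" "c n \<le> Yhi * (p n * (1 - X n))"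
     "Ylo * (p n * X n) \<le> p n * Y n - c n" "p n * Y n - c n \<le> Yhi * (p n * X n)"
    using assms unfolding cb_def by blast+
  have "Ylo * (p n * (1 - X n)) + Ylo * (p n * X n) = Ylo * p n"
       "Yhi * (p n * (1 - X n)) + Yhi * (p n * X n) = Yhi * p n" by (simp_all add: algebra_simps)
  then show ?thesis using h by linarith
qed

lemma L2: assumes "cb Ylo Yhi p X Y c"
  shows "alo Ylo Yhi p X Y \<le> aNM p X Y \<and> aNM p X Y \<le> ahi Ylo Yhi p X Y"
proof -
  have pt: "p n * max (Y n - Yhi * X n) (Ylo * (1 - X n)) \<le> p n * ((1 - X n) * Y n) \<and>
            p n * ((1 - X n) * Y n) \<le> p n * min (Y n - Ylo * X n) (Yhi * (1 - X n))" for n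
  proof (cases "p n = 0")
    case True then show ?thesis by simp
  next
    case False
    then have pp: "p n > 0" using p_nn[of n] by simp
    have yb: "Ylo \<le> Y n" "Y n \<le> Yhi" using Ybounds[OF assms, of n] pp
      by (simp_all add: mult.commute)
    have x: "0 \<le> X n" "0 \<le> 1 - X n" using X01[of n] by auto
    have "X n * Y n \<le> X n * Yhi" "X n * Ylo \<le> X n * Y n" "(1 - X n) * Ylo \<le> (1 - X n) * Y n" "(1 - X n) * Y n \<le> (1 - X n) * Yhi"
      using yb x by (auto intro: mult_left_mono)
    then have "max (Y n - Yhi * X n) (Ylo * (1 - X n)) \<le> (1 - X n) * Y n"
              "(1 - X n) * Y n \<le> min (Y n - Ylo * X n) (Yhi * (1 - X n))"
      by (auto simp: algebra_simps)
    then show ?thesis using pp by (auto intro: mult_left_mono)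
  qed
  have "(\<Sum>n\<in>UNIV. p n * max (Y n - Yhi * X n) (Ylo * (1 - X n))) \<le> (\<Sum>n\<in>UNIV. p n * ((1 - X n) * Y n))"
    by (rule sum_mono) (use pt in blast)
  moreover have "(\<Sum>n\<in>UNIV. p n * ((1 - X n) * Y n)) \<le> (\<Sum>n\<in>UNIV. p n * min (Y n - Ylo * X n) (Yhi * (1 - X n)))"
    by (rule sum_mono) (use pt in blast)
  ultimately show ?thesis using Bpos
    unfolding alo_def ahi_def aNM_def AB by (simp add: divide_right_mono)
qed

lemma c0: assumes "cb Ylo Yhi p X Y c" "p n = 0" shows "c n = 0"
  using assms unfolding cb_def by (metis mult_zero_left mult_zero_right order_antisym)

lemma L3: assumes "cb Ylo Yhi p X Y c"
  shows "adB p X Y c = (\<Sum>n\<in>UNIV. p n * (1 - X n)) * (aNM p X Y - aY0 p X c)"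
proof -
  have pt: "p n * ((p n * Y n - c n) / p n - Y n * X n) = p n * ((1 - X n) * Y n) - c n" for n
    by (cases "p n = 0") (auto simp: c0[OF assms] field_simps)
  have "adB p X Y c = (\<Sum>n\<in>UNIV. p n * ((1 - X n) * Y n)) - (\<Sum>n\<in>UNIV. c n)"
    unfolding adB_def pt by (simp add: sum_subtractf)
  moreover have "(\<Sum>n\<in>UNIV. p n * (1 - X n)) * ((\<Sum>n\<in>UNIV. p n * ((1 - X n) * Y n)) / (\<Sum>n\<in>UNIV. p n * (1 - X n))
     - (\<Sum>n\<in>UNIV. c n) / (\<Sum>n\<in>UNIV. p n * (1 - X n))) = (\<Sum>n\<in>UNIV. p n * ((1 - X n) * Y n)) - (\<Sum>n\<in>UNIV. c n)"
    using Bpos by (simp add: right_diff_distrib)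
  ultimately show ?thesis unfolding aNM_def aY0_def by simp
qed

lemma sums:
  "(\<Sum>n\<in>UNIV. X n * (p n * Y n - c n)) = (\<Sum>n\<in>UNIV. p n * X n * Y n) - (\<Sum>n\<in>UNIV. X n * c n)"
  "(\<Sum>n\<in>UNIV. p n * Y n - c n) = (\<Sum>n\<in>UNIV. p n * Y n) - (\<Sum>n\<in>UNIV. c n)"
  "(\<Sum>n\<in>UNIV. X n * (p n * X n)) = (\<Sum>n\<in>UNIV. p n * (X n)\<^sup>2)"
  "(\<Sum>n\<in>UNIV. X n * (p n * (1 - X n))) = (\<Sum>n\<in>UNIV. p n * X n) - (\<Sum>n\<in>UNIV. p n * (X n)\<^sup>2)"
  "(\<Sum>n\<in>UNIV. p n * ((1 - X n) * Y n)) = (\<Sum>n\<in>UNIV. p n * Y n) - (\<Sum>n\<in>UNIV. p n * X n * Y n)"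
  by (simp_all add: sum_subtractf algebra_simps power2_eq_square)

lemma Vform: "aV p X = (\<Sum>n\<in>UNIV. p n * (X n)\<^sup>2) - (\<Sum>n\<in>UNIV. p n * X n)\<^sup>2"
proof -
  define A where "A = (\<Sum>n\<in>UNIV. p n * X n)"
  have "aV p X = (\<Sum>n\<in>UNIV. p n * (X n)\<^sup>2 - 2 * A * (p n * X n) + A\<^sup>2 * p n)"
    unfolding aV_def A_def[symmetric] by (rule sum.cong) (auto simp: power2_eq_square algebra_simps)
  also have "\<dots> = (\<Sum>n\<in>UNIV. p n * (X n)\<^sup>2) - 2 * A * A + A\<^sup>2 * 1"
    by (simp add: sum.distrib sum_subtractf sum_distrib_left[symmetric] A_def sum_p)
  finally show ?thesis by (simp add: A_def power2_eq_square)
qed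

lemma Covform: "aCov p X Y = (\<Sum>n\<in>UNIV. p n * X n * Y n) - (\<Sum>n\<in>UNIV. p n * X n) * (\<Sum>n\<in>UNIV. p n * Y n)"
proof -
  define A where "A = (\<Sum>n\<in>UNIV. p n * X n)"
  define E where "E = (\<Sum>n\<in>UNIV. p n * Y n)"
  have "aCov p X Y = (\<Sum>n\<in>UNIV. p n * X n * Y n - A * (p n * Y n) - E * (p n * X n) + A * E * p n)"
    unfolding aCov_def A_def[symmetric] E_def[symmetric] by (rule sum.cong) (auto simp: algebra_simps)
  also have "\<dots> = (\<Sum>n\<in>UNIV. p n * X n * Y n) - A * E - E * A + A * E * 1"
    by (simp add: sum.distrib sum_subtractf sum_distrib_left[symmetric] A_def E_def sum_p)
  finally show ?thesis by (simp add: A_def E_def)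
qed

lemma L4: assumes "aV p X > 0"
  shows "adW p X Y c * (\<Sum>n\<in>UNIV. p n * X n) = (aY0 p X c - aER p X Y) * aV p X"
proof -
  define A where "A = (\<Sum>n\<in>UNIV. p n * X n)"
  define B where "B = (\<Sum>n\<in>UNIV. p n * (1 - X n))"
  define K where "K = (\<Sum>n\<in>UNIV. p n * X n * Y n)"
  define J where "J = (\<Sum>n\<in>UNIV. X n * c n)"
  define C where "C = (\<Sum>n\<in>UNIV. c n)"
  define E where "E = (\<Sum>n\<in>UNIV. p n * Y n)"
  define S where "S = (\<Sum>n\<in>UNIV. p n * (X n)\<^sup>2)"
  have A: "A > 0" using Apos A_def by simp
  have B: "B > 0" "B = 1 - A" using Bpos AB A_def B_def by simp_all
  have V: "aV p X = S - A\<^sup>2" "S - A\<^sup>2 > 0" using Vform assms S_def A_def by simp_all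
  have W: "adW p X Y c = ((K - J) / A - (E - C) / A * (S / A)) * A + (J / B - C / B * ((A - S) / B)) * B"
    unfolding adW_def sums A_def[symmetric] B_def[symmetric] K_def[symmetric] J_def[symmetric]
      C_def[symmetric] E_def[symmetric] S_def[symmetric] by simp
  have ER: "aER p X Y = E - (K - A * E) / (S - A\<^sup>2) * A"
    unfolding aER_def Covform V(1) A_def K_def E_def S_def by simp
  have Y0: "aY0 p X c = C / B" unfolding aY0_def C_def B_def by simp
  have l: "adW p X Y c * A = K * A - (E - C) * S - C * A * (A - S) / B"
    unfolding W using A B by (simp add: field_simps)
  have r: "(C / B - (E - (K - A * E) / (S - A\<^sup>2) * A)) * (S - A\<^sup>2) = (C / B - E) * (S - A\<^sup>2) + (K - A * E) * A"
    using V(2) by (rule aux2)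
  have "K * A - (E - C) * S - C * A * (A - S) / B = (C / B - E) * (S - A\<^sup>2) + (K - A * E) * A"
  proof -
    have "C * S - C * A * (A - S) / B = (C * S * B - C * A * (A - S)) / B"
      using B by (simp add: field_simps)
    also have "C * S * B - C * A * (A - S) = C * (S - A\<^sup>2)"
      by (simp add: B(2) algebra_simps power2_eq_square)
    finally have "C * S - C * A * (A - S) / B = C / B * (S - A\<^sup>2)" by simp
    then show ?thesis by (rule aux)
  qed
  then show ?thesis unfolding ER Y0 V(1) A_def[symmetric] l r .
qed

lemma L5: assumes "aV p X > 0" "aY0 p X c = aNM p X Y" "aY0 p X c = aER p X Y"
  shows "aY0 p X c = aY1 p X Y c"
proof -
  define A where "A = (\<Sum>n\<in>UNIV. p n * X n)"
  define B where "B = (\<Sum>n\<in>UNIV. p n * (1 - X n))"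
  define K where "K = (\<Sum>n\<in>UNIV. p n * X n * Y n)"
  define C where "C = (\<Sum>n\<in>UNIV. c n)"
  define E where "E = (\<Sum>n\<in>UNIV. p n * Y n)"
  define S where "S = (\<Sum>n\<in>UNIV. p n * (X n)\<^sup>2)"
  have A: "A > 0" using Apos A_def by simp
  have B: "B > 0" "B = 1 - A" using Bpos AB A_def B_def by simp_all
  have V: "aV p X = S - A\<^sup>2" "S - A\<^sup>2 > 0" using Vform assms S_def A_def by simp_all
  have SA: "S < A" using S2_lt S_def A_def by simp
  have ER: "aER p X Y = E - (K - A * E) / (S - A\<^sup>2) * A"
    unfolding aER_def Covform V(1) A_def K_def E_def S_def by simp
  have Y0: "aY0 p X c = C / B" unfolding aY0_def C_def B_def by simp
  have NM: "aNM p X Y = (E - K) / B" unfolding aNM_def sums B_def E_def K_def by simp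
  have Y1: "aY1 p X Y c = (E - C) / A" unfolding aY1_def sums A_def E_def C_def by simp
  have e1: "C = E - K" using assms(2) B unfolding Y0 NM by (simp add: field_simps)
  have "C / B = E - (K - A * E) / (S - A\<^sup>2) * A" using assms(3) unfolding Y0 ER by simp
  then have cc: "C = (E - (K - A * E) / (S - A\<^sup>2) * A) * B" using B by (simp add: divide_eq_eq)
  have R: "(E - (K - A * E) / (S - A\<^sup>2) * A) * (S - A\<^sup>2) = E * (S - A\<^sup>2) - (K - A * E) * A"
    using V(2) by (simp add: field_simps)
  have e2: "C * (S - A\<^sup>2) = B * (E * (S - A\<^sup>2) - (K - A * E) * A)"
    unfolding cc R[symmetric] by (simp add: algebra_simps)
  have "(K - A * E) * (A - S) = C * (S - A\<^sup>2) - B * (E * (S - A\<^sup>2) - (K - A * E) * A)"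
    by (simp add: e1 B(2) algebra_simps power2_eq_square)
  then have "(K - A * E) * (A - S) = 0" using e2 by simp
  then have "K = A * E" using SA by simp
  then have "C = (1 - A) * E" using e1 by (simp add: algebra_simps)
  then have ce: "C = B * E" using B(2) by simp
  have "C / B = E" using ce B by simp
  moreover have "E - C = A * E" using ce B(2) by (simp add: algebra_simps)
  then have "(E - C) / A = E" using A by simp
  ultimately show ?thesis unfolding Y0 Y1 by simp
qed

lemma L6: assumes "cb Ylo Yhi p X Y c0" "alo Ylo Yhi p X Y \<le> y" "y \<le> ahi Ylo Yhi p X Y"
  shows "\<exists>c. cb Ylo Yhi p X Y c \<and> aY0 p X c = y"
proof -
  define Lo where "Lo n = p n * max (Y n - Yhi * X n) (Ylo * (1 - X n))" for n
  define Up where "Up n = p n * min (Y n - Ylo * X n) (Yhi * (1 - X n))" for n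
  define B where "B = (\<Sum>n\<in>UNIV. p n * (1 - X n))"
  have B: "B > 0" using Bpos B_def by simp
  have LU: "Lo n \<le> Up n" for n using cbD[OF assms(1), of n] Lo_def Up_def by simp
  have s1: "(\<Sum>n\<in>UNIV. Lo n) \<le> y * B" using assms(2) B
    unfolding alo_def AB[symmetric] B_def[symmetric] Lo_def[symmetric] by (simp add: field_simps)
  have s2: "y * B \<le> (\<Sum>n\<in>UNIV. Up n)" using assms(3) B
    unfolding ahi_def AB[symmetric] B_def[symmetric] Up_def[symmetric] by (simp add: field_simps)
  define D where "D = (\<Sum>n\<in>UNIV. Up n - Lo n)"
  have D: "D \<ge> 0" unfolding D_def using LU by (simp add: sum_nonneg)
  have D2: "D = (\<Sum>n\<in>UNIV. Up n) - (\<Sum>n\<in>UNIV. Lo n)" unfolding D_def by (simp add: sum_subtractf)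
  define t where "t = (if D = 0 then 0 else (y * B - (\<Sum>n\<in>UNIV. Lo n)) / D)"
  have t: "0 \<le> t" "t \<le> 1" using D D2 s1 s2 by (auto simp: t_def field_simps)
  define c where "c n = Lo n + t * (Up n - Lo n)" for n
  have cb: "cb Ylo Yhi p X Y c"
  proof (rule cbI)
    fix n
    have "0 \<le> t * (Up n - Lo n)" using t LU[of n] by simp
    moreover have "t * (Up n - Lo n) \<le> 1 * (Up n - Lo n)" using t LU[of n] by (intro mult_right_mono) auto
    ultimately show "p n * max (Y n - Yhi * X n) (Ylo * (1 - X n)) \<le> c n \<and> c n \<le> p n * min (Y n - Ylo * X n) (Yhi * (1 - X n))"
      unfolding c_def Lo_def[symmetric] Up_def[symmetric] by simp
  qed
  have "(\<Sum>n\<in>UNIV. c n) = (\<Sum>n\<in>UNIV. Lo n) + t * D"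
    unfolding c_def D_def by (simp add: sum.distrib sum_distrib_left)
  also have "\<dots> = y * B" using D D2 s1 s2 by (auto simp: t_def)
  finally have "aY0 p X c = y" using B unfolding aY0_def B_def[symmetric] by simp
  with cb show ?thesis by blast
qed

end

definition SS :: "'n outcome measure" where
  "SS = count_space UNIV \<Otimes>\<^sub>M (lborel \<Otimes>\<^sub>M count_space UNIV)"

definition good :: "('n::finite) outcome measure \<Rightarrow> bool" where
  "good M \<longleftrightarrow> prob_space M \<and> sets M = sets (SS::'n outcome measure) \<and> integrable M Yv"

definition II :: "('n::finite) outcome measure \<Rightarrow> bool \<Rightarrow> 'n \<Rightarrow> ('n outcome \<Rightarrow> real) \<Rightarrow> real" where
  "II M x n f = (\<integral>\<omega>. indicator (cellXN x n) \<omega> * f \<omega> \<partial>M)"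

lemma space_SS: "space (SS::('n::finite) outcome measure) = UNIV"
  by (simp add: SS_def space_pair_measure)

lemma cellXN_SS: "cellXN x n \<in> sets (SS::('n::finite) outcome measure)"
proof -
  have "{\<omega> \<in> space (SS::'n outcome measure). fst \<omega> = x \<and> snd (snd \<omega>) = n} \<in> sets SS"
    unfolding SS_def by measurable
  then show ?thesis by (simp add: cellXN_def Nv_def space_SS)
qed

lemma good_space: "good M \<Longrightarrow> space M = UNIV"
  by (metis good_def sets_eq_imp_space_eq space_SS)

lemma good_cell: "good M \<Longrightarrow> cellXN x n \<in> sets M"
  using cellXN_SS good_def by metis

lemma good_int_cell: fixes f :: "('n::finite) outcome \<Rightarrow> real" shows "good M \<Longrightarrow> integrable M f \<Longrightarrow> integrable M (\<lambda>\<omega>. indicator (cellXN x n) \<omega> * f \<omega>)"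
  using integrable_real_mult_indicator[OF good_cell, of M f x n] by (simp add: mult.commute)

lemma good_int1: "good M \<Longrightarrow> integrable M (\<lambda>_. 1::real)"
  unfolding good_def using prob_space.finite_measure finite_measure.integrable_const by blast

lemma partition_pt:
  fixes g :: "bool \<Rightarrow> ('n::finite) \<Rightarrow> real" and f :: "'n outcome \<Rightarrow> real"
  shows "(\<Sum>x\<in>UNIV. \<Sum>n\<in>UNIV. g x n * (indicator (cellXN x n) \<omega> * f \<omega>)) = g (fst \<omega>) (Nv \<omega>) * f \<omega>"
proof -
  have e: "\<And>x n. g x n * (indicator (cellXN x n) \<omega> * f \<omega>) = (if n = Nv \<omega> then (if x = fst \<omega> then g x n * f \<omega> else 0) else 0)"
    by (auto simp: indicator_def cellXN_def)
  have "\<And>x. (\<Sum>n\<in>UNIV. g x n * (indicator (cellXN x n) \<omega> * f \<omega>)) = (if x = fst \<omega> then g x (Nv \<omega>) * f \<omega> else 0)"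
    unfolding e by (simp add: sum.delta')
  then show ?thesis by (simp add: UNIV_bool)
qed

lemma master_int:
  fixes g :: "bool \<Rightarrow> ('n::finite) \<Rightarrow> real" and f :: "'n outcome \<Rightarrow> real"
  assumes "good M" "integrable M f" "\<And>\<omega>. G \<omega> = g (fst \<omega>) (Nv \<omega>)"
  shows "integrable M (\<lambda>\<omega>. G \<omega> * f \<omega>)"
proof -
  have "integrable M (\<lambda>\<omega>. \<Sum>x\<in>UNIV. \<Sum>n\<in>UNIV. g x n * (indicator (cellXN x n) \<omega> * f \<omega>))"
    using good_int_cell[OF assms(1,2)] by auto
  then show ?thesis by (simp add: partition_pt assms(3))
qed

lemma master:
  fixes g :: "bool \<Rightarrow> ('n::finite) \<Rightarrow> real" and f :: "'n outcome \<Rightarrow> real"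
  assumes "good M" "integrable M f" "\<And>\<omega>. G \<omega> = g (fst \<omega>) (Nv \<omega>)"
  shows "(\<integral>\<omega>. G \<omega> * f \<omega> \<partial>M) = (\<Sum>x\<in>UNIV. \<Sum>n\<in>UNIV. g x n * II M x n f)"
proof -
  have "(\<integral>\<omega>. G \<omega> * f \<omega> \<partial>M) = (\<integral>\<omega>. (\<Sum>x\<in>UNIV. \<Sum>n\<in>UNIV. g x n * (indicator (cellXN x n) \<omega> * f \<omega>)) \<partial>M)"
    by (simp add: partition_pt assms(3))
  also have "\<dots> = (\<Sum>x\<in>UNIV. \<Sum>n\<in>UNIV. g x n * II M x n f)"
    using good_int_cell[OF assms(1,2)] by (simp add: II_def integral_sum)
  finally show ?thesis .
qed

definition q :: "('n::finite) outcome measure \<Rightarrow> bool \<Rightarrow> 'n \<Rightarrow> real" where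
  "q M x n = measure M (cellXN x n)"
definition s :: "('n::finite) outcome measure \<Rightarrow> bool \<Rightarrow> 'n \<Rightarrow> real" where
  "s M x n = II M x n Yv"

lemma ifmul[simp]: "(if P then 1 else 0) * (x::real) = (if P then x else 0)" "x * (if P then 1 else 0) = (if P then x else 0)"
  by auto

lemma II_1: "good M \<Longrightarrow> II M x n (\<lambda>_. 1) = q M x n"
  by (simp add: II_def q_def good_space)

lemma good_intY: "good M \<Longrightarrow> integrable M Yv" by (simp add: good_def)

lemma q_nonneg: "q M x n \<ge> 0" by (simp add: q_def)

lemma II_null: assumes "good M" "q M x n = 0" shows "II M x n f = 0"
proof -
  have ps: "prob_space M" using assms(1) good_def by blast
  have "emeasure M (cellXN x n) = 0"
    using assms(2) finite_measure.emeasure_eq_measure[OF prob_space.finite_measure[OF ps]] by (simp add: q_def)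
  then have "cellXN x n \<in> null_sets M" using good_cell[OF assms(1)] by auto
  then have "AE \<omega> in M. \<omega> \<notin> cellXN x n" by (rule AE_not_in)
  then have "AE \<omega> in M. indicator (cellXN x n) \<omega> * f \<omega> = 0" by eventually_elim simp
  then show ?thesis unfolding II_def by (rule integral_eq_zero_AE)
qed

lemma sum_q: assumes "good M" shows "(\<Sum>x\<in>UNIV. \<Sum>n\<in>UNIV. q M x n) = 1"
proof -
  have ps: "prob_space M" using assms(1) good_def by blast
  have "(\<integral>\<omega>. (\<lambda>_. 1) \<omega> * (\<lambda>_. 1) \<omega> \<partial>M) = (\<Sum>x\<in>UNIV. \<Sum>n\<in>UNIV. (\<lambda>x n. 1) x n * II M x n (\<lambda>_. 1))"
    by (rule master[OF assms good_int1[OF assms]]) simp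
  moreover have "(\<integral>\<omega>. (\<lambda>_. 1) \<omega> * (\<lambda>_. 1) \<omega> \<partial>M) = (1::real)"
    using prob_space.prob_space[OF ps] by simp
  ultimately show ?thesis by (simp add: II_1[OF assms])
qed

lemma R_pN: assumes "good M" shows "pN M n = q M True n + q M False n"
proof -
  have "(\<integral>\<omega>. indicator (cellN n) \<omega> * (\<lambda>_. 1) \<omega> \<partial>M) = (\<Sum>x\<in>UNIV. \<Sum>k\<in>UNIV. (\<lambda>x k. if k = n then 1 else 0) x k * II M x k (\<lambda>_. 1))"
    by (rule master[OF assms good_int1[OF assms]]) (simp add: indicator_def cellN_def)
  then show ?thesis by (simp add: pN_def II_1[OF assms] good_space[OF assms] UNIV_bool)
qed

lemma R_NY: assumes "good M" shows "(\<integral>\<omega>. indicator (cellN n) \<omega> * Yv \<omega> \<partial>M) = s M True n + s M False n"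
proof -
  have "(\<integral>\<omega>. indicator (cellN n) \<omega> * Yv \<omega> \<partial>M) = (\<Sum>x\<in>UNIV. \<Sum>k\<in>UNIV. (\<lambda>x k. if k = n then 1 else 0) x k * II M x k Yv)"
    by (rule master[OF assms good_intY[OF assms]]) (simp add: indicator_def cellN_def)
  then show ?thesis by (simp add: s_def UNIV_bool)
qed

lemma R_NX: assumes "good M" shows "(\<integral>\<omega>. indicator (cellN n) \<omega> * Xv \<omega> \<partial>M) = q M True n"
proof -
  have "(\<integral>\<omega>. (indicator (cellN n) \<omega> * Xv \<omega>) * (\<lambda>_. 1) \<omega> \<partial>M) = (\<Sum>x\<in>UNIV. \<Sum>k\<in>UNIV. (\<lambda>x k. if k = n \<and> x then 1 else 0) x k * II M x k (\<lambda>_. 1))"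
    by (rule master[OF assms good_int1[OF assms]]) (simp add: indicator_def cellN_def Xv_def)
  then show ?thesis by (simp add: II_1[OF assms] UNIV_bool)
qed

lemma R_NYX: assumes "good M" shows "(\<integral>\<omega>. indicator (cellN n) \<omega> * (Yv \<omega> * Xv \<omega>) \<partial>M) = s M True n"
proof -
  have "(\<integral>\<omega>. (indicator (cellN n) \<omega> * Xv \<omega>) * Yv \<omega> \<partial>M) = (\<Sum>x\<in>UNIV. \<Sum>k\<in>UNIV. (\<lambda>x k. if k = n \<and> x then 1 else 0) x k * II M x k Yv)"
    by (rule master[OF assms good_intY[OF assms]]) (simp add: indicator_def cellN_def Xv_def)
  then show ?thesis by (simp add: s_def UNIV_bool mult_ac)
qed

lemma R_EEN: assumes "good M" "\<And>\<omega>. G \<omega> = h (Nv \<omega>)"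
  shows "EE M G = (\<Sum>n\<in>UNIV. pN M n * h n)"
proof -
  have "(\<integral>\<omega>. G \<omega> * (\<lambda>_. 1) \<omega> \<partial>M) = (\<Sum>x\<in>UNIV. \<Sum>k\<in>UNIV. (\<lambda>x k. h k) x k * II M x k (\<lambda>_. 1))"
    by (rule master[OF assms(1) good_int1[OF assms(1)]]) (simp add: assms(2))
  then show ?thesis by (simp add: EE_def II_1[OF assms(1)] UNIV_bool R_pN[OF assms(1)] sum.distrib algebra_simps)
qed

lemma R_EEX: assumes "good M" "\<And>\<omega>. G \<omega> = h (fst \<omega>)"
  shows "EE M G = h True * (\<Sum>n\<in>UNIV. q M True n) + h False * (\<Sum>n\<in>UNIV. q M False n)"
proof -
  have "(\<integral>\<omega>. G \<omega> * (\<lambda>_. 1) \<omega> \<partial>M) = (\<Sum>x\<in>UNIV. \<Sum>k\<in>UNIV. (\<lambda>x k. h x) x k * II M x k (\<lambda>_. 1))"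
    by (rule master[OF assms(1) good_int1[OF assms(1)]]) (simp add: assms(2))
  then show ?thesis by (simp add: EE_def II_1[OF assms(1)] UNIV_bool sum_distrib_left algebra_simps)
qed

lemma R_cellX: assumes "good M" shows "measure M (cellX x) = (\<Sum>n\<in>UNIV. q M x n)"
proof -
  have "(\<integral>\<omega>. indicator (cellX x) \<omega> * (\<lambda>_. 1) \<omega> \<partial>M) = (\<Sum>y\<in>UNIV. \<Sum>k\<in>UNIV. (\<lambda>y k. if y = x then 1 else 0) y k * II M y k (\<lambda>_. 1))"
    by (rule master[OF assms good_int1[OF assms]]) (simp add: indicator_def cellX_def)
  then show ?thesis by (cases x) (simp_all add: II_1[OF assms] good_space[OF assms] UNIV_bool)
qed

lemma R_XY: assumes "good M" shows "(\<integral>\<omega>. indicator (cellX x) \<omega> * Yv \<omega> \<partial>M) = (\<Sum>n\<in>UNIV. s M x n)"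
proof -
  have "(\<integral>\<omega>. indicator (cellX x) \<omega> * Yv \<omega> \<partial>M) = (\<Sum>y\<in>UNIV. \<Sum>k\<in>UNIV. (\<lambda>y k. if y = x then 1 else 0) y k * II M y k Yv)"
    by (rule master[OF assms good_intY[OF assms]]) (simp add: indicator_def cellX_def)
  then show ?thesis by (cases x) (simp_all add: s_def UNIV_bool)
qed

lemma R_XYXN: assumes "good M" shows "(\<integral>\<omega>. indicator (cellX x) \<omega> * (Yv \<omega> * XN M \<omega>) \<partial>M) = (\<Sum>n\<in>UNIV. XNn M n * s M x n)"
proof -
  have "(\<integral>\<omega>. (indicator (cellX x) \<omega> * XN M \<omega>) * Yv \<omega> \<partial>M) = (\<Sum>y\<in>UNIV. \<Sum>k\<in>UNIV. (\<lambda>y k. if y = x then XNn M k else 0) y k * II M y k Yv)"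
    by (rule master[OF assms good_intY[OF assms]]) (simp add: indicator_def cellX_def XN_def)
  then show ?thesis by (cases x) (simp_all add: s_def UNIV_bool mult_ac)
qed

lemma R_XXN: assumes "good M" shows "(\<integral>\<omega>. indicator (cellX x) \<omega> * XN M \<omega> \<partial>M) = (\<Sum>n\<in>UNIV. XNn M n * q M x n)"
proof -
  have "(\<integral>\<omega>. (indicator (cellX x) \<omega> * XN M \<omega>) * (\<lambda>_. 1) \<omega> \<partial>M) = (\<Sum>y\<in>UNIV. \<Sum>k\<in>UNIV. (\<lambda>y k. if y = x then XNn M k else 0) y k * II M y k (\<lambda>_. 1))"
    by (rule master[OF assms good_int1[OF assms]]) (simp add: indicator_def cellX_def XN_def)
  then show ?thesis by (cases x) (simp_all add: II_1[OF assms] UNIV_bool)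
qed

lemma R_EXv: assumes "good M" shows "EE M Xv = (\<Sum>n\<in>UNIV. q M True n)"
proof -
  have "(\<integral>\<omega>. Xv \<omega> * (\<lambda>_. 1) \<omega> \<partial>M) = (\<Sum>y\<in>UNIV. \<Sum>k\<in>UNIV. (\<lambda>y k. if y then 1 else 0) y k * II M y k (\<lambda>_. 1))"
    by (rule master[OF assms good_int1[OF assms]]) (simp add: Xv_def)
  then show ?thesis by (simp add: EE_def II_1[OF assms] UNIV_bool)
qed

lemma pN_nonneg: "pN M n \<ge> 0" by (simp add: pN_def)

lemma R_qT: assumes "good M" shows "q M True n = pN M n * XNn M n"
proof -
  have "XNn M n = q M True n / pN M n"
    by (simp add: XNn_def condN_def cE_def R_NX[OF assms] pN_def)
  moreover have "pN M n = 0 \<Longrightarrow> q M True n = 0"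
    using R_pN[OF assms, of n] q_nonneg[of M True n] q_nonneg[of M False n] by linarith
  ultimately show ?thesis by auto
qed

lemma R_qF: assumes "good M" shows "q M False n = pN M n * (1 - XNn M n)"
  using R_qT[OF assms, of n] R_pN[OF assms, of n] by (simp add: algebra_simps)

lemma R_sTF: assumes "good M" shows "s M True n + s M False n = pN M n * YNn M n"
proof -
  have "YNn M n = (s M True n + s M False n) / pN M n"
    by (simp add: YNn_def condN_def cE_def R_NY[OF assms] pN_def)
  moreover have "pN M n = 0 \<Longrightarrow> s M True n = 0 \<and> s M False n = 0"
    using R_pN[OF assms, of n] q_nonneg[of M True n] q_nonneg[of M False n] II_null[OF assms]
    by (metis add_nonneg_eq_0_iff s_def)
  ultimately show ?thesis by auto
qed

lemma R_sT: assumes "good M" shows "s M True n = pN M n * YNn M n - s M False n"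
  using R_sTF[OF assms, of n] by simp

lemma R_Y0: assumes "good M" shows "Y0 M = aY0 (pN M) (XNn M) (s M False)"
  by (simp add: Y0_def condX_def cE_def R_XY[OF assms] R_cellX[OF assms] aY0_def R_qF[OF assms])

lemma R_Y1: assumes "good M" shows "Y1 M = aY1 (pN M) (XNn M) (YNn M) (s M False)"
  by (simp add: Y1_def condX_def cE_def R_XY[OF assms] R_cellX[OF assms] aY1_def R_qT[OF assms] R_sT[OF assms])

lemma R_EXv2: assumes "good M" shows "EE M Xv = (\<Sum>n\<in>UNIV. pN M n * XNn M n)"
  by (simp add: R_EXv[OF assms] R_qT[OF assms])

lemma R_dB: assumes "good M" shows "deltaB M = adB (pN M) (XNn M) (YNn M) (s M False)"
proof -
  have "deltaB M = (\<Sum>n\<in>UNIV. pN M n * (condN M (\<lambda>\<omega>'. Yv \<omega>' * Xv \<omega>') n - condN M Yv n * condN M Xv n))"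
    unfolding deltaB_def by (rule R_EEN[OF assms]) simp
  moreover have "\<And>n. condN M (\<lambda>\<omega>'. Yv \<omega>' * Xv \<omega>') n = (pN M n * YNn M n - s M False n) / pN M n"
    by (simp add: condN_def cE_def R_NYX[OF assms] R_sT[OF assms] pN_def)
  moreover have "\<And>n. condN M Yv n = YNn M n" "\<And>n. condN M Xv n = XNn M n"
    by (simp_all add: YNn_def XNn_def)
  ultimately show ?thesis by (simp only: adB_def)
qed

lemma R_dW: assumes "good M" shows "deltaW M = adW (pN M) (XNn M) (YNn M) (s M False)"
proof -
  have "deltaW M = (\<lambda>x. condX M (\<lambda>\<omega>'. Yv \<omega>' * XN M \<omega>') x - condX M Yv x * condX M (XN M) x) True * (\<Sum>n\<in>UNIV. q M True n)
     + (\<lambda>x. condX M (\<lambda>\<omega>'. Yv \<omega>' * XN M \<omega>') x - condX M Yv x * condX M (XN M) x) False * (\<Sum>n\<in>UNIV. q M False n)"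
    unfolding deltaW_def by (rule R_EEX[OF assms]) simp
  then show ?thesis
    by (simp add: adW_def condX_def cE_def R_XYXN[OF assms] R_XY[OF assms] R_XXN[OF assms] R_cellX[OF assms]
         R_sT[OF assms] R_qT[OF assms] R_qF[OF assms])
qed

lemma R_EXN: assumes "good M" shows "EE M (XN M) = (\<Sum>k\<in>UNIV. pN M k * XNn M k)"
  by (rule R_EEN[OF assms]) (simp add: XN_def)
lemma R_EYN: assumes "good M" shows "EE M (YN M) = (\<Sum>k\<in>UNIV. pN M k * YNn M k)"
  by (rule R_EEN[OF assms]) (simp add: YN_def)

lemma R_V: assumes "good M" shows "VarXN M = aV (pN M) (XNn M)"
  unfolding VarXN_def aV_def R_EXN[OF assms] by (rule R_EEN[OF assms]) (simp add: XN_def)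

lemma R_Cov: assumes "good M" shows "CovYNXN M = aCov (pN M) (XNn M) (YNn M)"
  unfolding CovYNXN_def aCov_def R_EXN[OF assms] R_EYN[OF assms] by (rule R_EEN[OF assms]) (simp add: XN_def YN_def)

lemma R_ER: assumes "good M" shows "Y0_ER M = aER (pN M) (XNn M) (YNn M)"
  by (simp add: Y0_ER_def D_ER_def aER_def R_V[OF assms] R_Cov[OF assms] R_EXN[OF assms] R_EYN[OF assms])

lemma R_NM: assumes "good M" shows "Y0_NM M = aNM (pN M) (XNn M) (YNn M)"
proof -
  have 1: "EE M (\<lambda>\<omega>. (1 - XN M \<omega>) * YN M \<omega>) = (\<Sum>n\<in>UNIV. pN M n * ((1 - XNn M n) * YNn M n))"
    by (rule R_EEN[OF assms]) (simp add: XN_def YN_def)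
  have 2: "EE M (\<lambda>\<omega>. 1 - XN M \<omega>) = (\<Sum>n\<in>UNIV. pN M n * (1 - XNn M n))"
    by (rule R_EEN[OF assms]) (simp add: XN_def)
  show ?thesis by (simp add: Y0_NM_def aNM_def 1 2)
qed

lemma R_lo: assumes "good M" shows "Y0_MOB_lo Ylo Yhi M = alo Ylo Yhi (pN M) (XNn M) (YNn M)"
proof -
  have 1: "EE M (\<lambda>\<omega>. max (YN M \<omega> - Yhi * XN M \<omega>) (Ylo * (1 - XN M \<omega>))) = (\<Sum>n\<in>UNIV. pN M n * max (YNn M n - Yhi * XNn M n) (Ylo * (1 - XNn M n)))"
    by (rule R_EEN[OF assms]) (simp add: XN_def YN_def)
  show ?thesis by (simp add: Y0_MOB_lo_def alo_def 1 R_EXv2[OF assms])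
qed

lemma R_hi: assumes "good M" shows "Y0_MOB_hi Ylo Yhi M = ahi Ylo Yhi (pN M) (XNn M) (YNn M)"
proof -
  have 1: "EE M (\<lambda>\<omega>. min (YN M \<omega> - Ylo * XN M \<omega>) (Yhi * (1 - XN M \<omega>))) = (\<Sum>n\<in>UNIV. pN M n * min (YNn M n - Ylo * XNn M n) (Yhi * (1 - XNn M n)))"
    by (rule R_EEN[OF assms]) (simp add: XN_def YN_def)
  show ?thesis by (simp add: Y0_MOB_hi_def ahi_def 1 R_EXv2[OF assms])
qed


lemma R_X: assumes "good M" shows "XNn M n = q M True n / pN M n"
  by (simp add: XNn_def condN_def cE_def R_NX[OF assms] pN_def)
lemma R_Y: assumes "good M" shows "YNn M n = (s M True n + s M False n) / pN M n"
  by (simp add: YNn_def condN_def cE_def R_NY[OF assms] pN_def)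

lemma Yv_meas: "Yv \<in> borel_measurable (SS::('n::finite) outcome measure)"
  unfolding SS_def Yv_def by measurable

lemma cell_fun_meas:
  fixes f :: "('n::finite) outcome \<Rightarrow> real"
  assumes "f \<in> borel_measurable SS"
  shows "(\<lambda>\<omega>. indicator (cellXN x n) \<omega> * f \<omega>) \<in> borel_measurable (SS::'n outcome measure)"
proof -
  have "indicator (cellXN x n) \<in> borel_measurable (SS::'n outcome measure)"
    by (rule borel_measurable_indicator[OF cellXN_SS])
  then show ?thesis using assms by (rule borel_measurable_times)
qed

lemma mult_if0: "(a::real) * (if P then b else 0) = (if P then a * b else 0)" by simp

definition wK :: "('n::finite \<Rightarrow> real) \<Rightarrow> ('n \<Rightarrow> real) \<Rightarrow> bool \<times> 'n \<Rightarrow> real" where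
  "wK p X k = (if fst k then p (snd k) * X (snd k) else p (snd k) * (1 - X (snd k)))"
definition yK :: "('n::finite \<Rightarrow> real) \<Rightarrow> ('n \<Rightarrow> real) \<Rightarrow> ('n \<Rightarrow> real) \<Rightarrow> ('n \<Rightarrow> real) \<Rightarrow> bool \<times> 'n \<Rightarrow> real" where
  "yK p X Y c k = (if fst k then (p (snd k) * Y (snd k) - c (snd k)) / (p (snd k) * X (snd k))
                   else c (snd k) / (p (snd k) * (1 - X (snd k))))"
definition gK :: "('n::finite \<Rightarrow> real) \<Rightarrow> ('n \<Rightarrow> real) \<Rightarrow> ('n \<Rightarrow> real) \<Rightarrow> ('n \<Rightarrow> real) \<Rightarrow> bool \<times> 'n \<Rightarrow> 'n outcome" where
  "gK p X Y c k = (fst k, yK p X Y c k, snd k)"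
definition MK :: "('n::finite \<Rightarrow> real) \<Rightarrow> ('n \<Rightarrow> real) \<Rightarrow> ('n \<Rightarrow> real) \<Rightarrow> ('n \<Rightarrow> real) \<Rightarrow> 'n outcome measure" where
  "MK p X Y c = distr (density (count_space UNIV) (\<lambda>k. ennreal (wK p X k))) SS (gK p X Y c)"

lemma gK_meas: "gK p X Y c \<in> measurable (density (count_space UNIV) (\<lambda>k. ennreal (wK p X k))) SS"
  by (simp add: measurable_cong_sets[OF sets_density refl] space_SS)

context
  fixes p X Y c :: "'n::finite \<Rightarrow> real" and Ylo Yhi :: real
  assumes wf: "wf p X Y" and cbc: "cb Ylo Yhi p X Y c"
begin

lemma wK_nn: "wK p X k \<ge> 0"
  using p_nn[OF wf] X01[OF wf] by (auto simp: wK_def)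

lemma sum_wK: "(\<Sum>k\<in>UNIV. wK p X k) = 1"
proof -
  have "(\<Sum>k\<in>UNIV. wK p X k) = (\<Sum>x\<in>UNIV. \<Sum>n\<in>UNIV. wK p X (x, n))"
    by (simp add: sum.cartesian_product UNIV_Times_UNIV[symmetric] del: UNIV_Times_UNIV)
  also have "\<dots> = (\<Sum>n\<in>UNIV. p n * X n + p n * (1 - X n))"
    by (simp add: UNIV_bool wK_def sum.distrib)
  also have "\<dots> = 1" using sum_p[OF wf] by (simp add: algebra_simps)
  finally show ?thesis .
qed

lemma dens_prob: "prob_space (density (count_space UNIV) (\<lambda>k. ennreal (wK p X k)))"
proof (rule prob_spaceI)
  have "emeasure (density (count_space UNIV) (\<lambda>k. ennreal (wK p X k))) UNIV = (\<Sum>k\<in>UNIV. ennreal (wK p X k))"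
    by (simp add: emeasure_density nn_integral_count_space_finite)
  also have "\<dots> = ennreal (\<Sum>k\<in>UNIV. wK p X k)" using wK_nn by (simp add: sum_ennreal)
  finally show "emeasure (density (count_space UNIV) (\<lambda>k. ennreal (wK p X k)))
     (space (density (count_space UNIV) (\<lambda>k. ennreal (wK p X k)))) = 1" by (simp add: sum_wK)
qed

lemma MK_int: assumes "F \<in> borel_measurable SS"
  shows "(\<integral>\<omega>. F \<omega> \<partial>MK p X Y c) = (\<Sum>k\<in>UNIV. wK p X k * F (gK p X Y c k))"
  unfolding MK_def
  by (simp add: integral_distr[OF gK_meas assms] integral_density wK_nn lebesgue_integral_count_space_finite)

lemma MK_good: "good (MK p X Y c)"
  unfolding good_def
proof (intro conjI)
  show "prob_space (MK p X Y c)" unfolding MK_def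
    by (rule prob_space.prob_space_distr[OF dens_prob gK_meas])
  show "sets (MK p X Y c) = sets SS" by (simp add: MK_def)
  show "integrable (MK p X Y c) Yv" unfolding MK_def
    by (simp add: integrable_distr_eq[OF gK_meas Yv_meas] integrable_density wK_nn integrable_count_space)
qed

lemma ind_gK: "indicator (cellXN x n) (gK p X Y c k) = (if k = (x, n) then 1 else (0::real))"
  by (cases k) (auto simp: indicator_def cellXN_def gK_def Nv_def)

lemma MK_II: assumes "f \<in> borel_measurable SS"
  shows "II (MK p X Y c) x n f = wK p X (x, n) * f (gK p X Y c (x, n))"
  unfolding II_def MK_int[OF cell_fun_meas[OF assms]] ind_gK
  by (simp add: mult_if0 sum.delta')

lemma MK_q: "q (MK p X Y c) x n = wK p X (x, n)"
  using MK_II[of "\<lambda>_. 1" x n] II_1[OF MK_good] by simp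

lemma cbn: "Ylo * (p n * (1 - X n)) \<le> c n" "c n \<le> Yhi * (p n * (1 - X n))"
  "Ylo * (p n * X n) \<le> p n * Y n - c n" "p n * Y n - c n \<le> Yhi * (p n * X n)"
  using cbc unfolding cb_def by blast+

lemma MK_sT: "s (MK p X Y c) True n = p n * Y n - c n"
proof -
  have "s (MK p X Y c) True n = p n * X n * ((p n * Y n - c n) / (p n * X n))"
    unfolding s_def MK_II[OF Yv_meas] by (simp add: wK_def yK_def gK_def Yv_def)
  moreover have "p n * X n = 0 \<Longrightarrow> p n * Y n - c n = 0"
  proof -
    assume h: "p n * X n = 0"
    show ?thesis using cbn(3,4)[of n] unfolding h by simp
  qed
  ultimately show ?thesis by (cases "p n * X n = 0") auto
qed

lemma MK_sF: "s (MK p X Y c) False n = c n"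
proof -
  have "s (MK p X Y c) False n = p n * (1 - X n) * (c n / (p n * (1 - X n)))"
    unfolding s_def MK_II[OF Yv_meas] by (simp add: wK_def yK_def gK_def Yv_def)
  moreover have "p n * (1 - X n) = 0 \<Longrightarrow> c n = 0"
  proof -
    assume h: "p n * (1 - X n) = 0"
    show ?thesis using cbn(1,2)[of n] unfolding h by simp
  qed
  ultimately show ?thesis by (cases "p n * (1 - X n) = 0") auto
qed

lemma MK_pN: "pN (MK p X Y c) n = p n"
  by (simp add: R_pN[OF MK_good] MK_q wK_def algebra_simps)

lemma MK_X: "XNn (MK p X Y c) n = X n"
  using p0[OF wf, of n] by (auto simp: R_X[OF MK_good] MK_pN MK_q wK_def)

lemma MK_Y: "YNn (MK p X Y c) n = Y n"
  using p0[OF wf, of n] by (auto simp: R_Y[OF MK_good] MK_pN MK_sT MK_sF)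

lemma MK_standing: "standing Ylo Yhi (MK p X Y c)"
proof -
  have a: "prob_space (MK p X Y c)" "integrable (MK p X Y c) Yv" using MK_good good_def by blast+
  have b: "sets (MK p X Y c) = sets (count_space UNIV \<Otimes>\<^sub>M (lborel \<Otimes>\<^sub>M count_space UNIV))"
    using MK_good good_def SS_def by metis
  have d: "\<exists>n. 0 < pN (MK p X Y c) n \<and> 0 < XNn (MK p X Y c) n \<and> XNn (MK p X Y c) n < 1"
    using wf unfolding wf_def by (simp add: MK_pN MK_X)
  have e: "Ylo \<le> cE (MK p X Y c) (cellXN x n) Yv \<and> cE (MK p X Y c) (cellXN x n) Yv \<le> Yhi"
    if pos: "0 < measure (MK p X Y c) (cellXN x n)" for x n
  proof -
    have ce: "cE (MK p X Y c) (cellXN x n) Yv = s (MK p X Y c) x n / q (MK p X Y c) x n"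
      by (simp add: cE_def s_def II_def q_def)
    have qp: "q (MK p X Y c) x n > 0" using pos by (simp add: q_def)
    show ?thesis
    proof (cases x)
      case True
      then show ?thesis using qp cbn[of n] unfolding ce by (simp add: MK_q MK_sT wK_def pos_le_divide_eq pos_divide_le_eq mult.commute)
    next
      case False
      then show ?thesis using qp cbn[of n] unfolding ce by (simp add: MK_q MK_sF wK_def pos_le_divide_eq pos_divide_le_eq mult.commute)
    qed
  qed
  show ?thesis unfolding standing_def using a b d e by blast
qed
end

lemma standing_good: "standing Ylo Yhi M \<Longrightarrow> good M"
  by (simp add: standing_def good_def SS_def)

lemma standing_wf: assumes "standing Ylo Yhi M" shows "wf (pN M) (XNn M) (YNn M)"
proof -
  have g: "good M" using standing_good[OF assms] .
  have qq: "q M True n \<ge> 0" "q M False n \<ge> 0" for n by (simp_all add: q_nonneg)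
  have a: "0 \<le> pN M n" for n by (rule pN_nonneg)
  have b: "0 \<le> XNn M n" for n using qq[of n] by (simp add: R_X[OF g] R_pN[OF g] divide_nonneg_nonneg)
  have c: "XNn M n \<le> 1" for n using qq[of n] by (simp add: R_X[OF g] R_pN[OF g] divide_le_eq_1) linarith
  have d: "pN M n = 0 \<longrightarrow> XNn M n = 0 \<and> YNn M n = 0" for n by (simp add: R_X[OF g] R_Y[OF g])
  have e: "(\<Sum>n\<in>UNIV. pN M n) = 1" using sum_q[OF g] by (simp add: R_pN[OF g] UNIV_bool sum.distrib add.commute)
  have f: "\<exists>n. 0 < pN M n \<and> 0 < XNn M n \<and> XNn M n < 1" using assms standing_def by blast
  show ?thesis unfolding wf_def using a b c d e f by blast
qed

lemma standing_cellbound: assumes "standing Ylo Yhi M"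
  shows "Ylo * q M x n \<le> s M x n \<and> s M x n \<le> Yhi * q M x n"
proof (cases "q M x n = 0")
  case True
  then show ?thesis using II_null[OF standing_good[OF assms] True] by (simp add: s_def)
next
  case False
  then have qp: "q M x n > 0" using q_nonneg[of M x n] by simp
  have ce: "cE M (cellXN x n) Yv = s M x n / q M x n"
    by (simp add: cE_def s_def II_def q_def)
  have "Ylo \<le> s M x n / q M x n \<and> s M x n / q M x n \<le> Yhi"
    using assms qp unfolding standing_def ce[symmetric] by (simp add: q_def)
  then show ?thesis using qp by (simp add: pos_le_divide_eq pos_divide_le_eq mult.commute)
qed

lemma standing_cb: assumes "standing Ylo Yhi M"
  shows "cb Ylo Yhi (pN M) (XNn M) (YNn M) (s M False)"
  unfolding cb_def
  using standing_cellbound[OF assms, of True] standing_cellbound[OF assms, of False]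
  by (simp add: R_qT[OF standing_good[OF assms], symmetric] R_qF[OF standing_good[OF assms], symmetric]
                R_sT[OF standing_good[OF assms], symmetric])


lemma obs_eq: "obs M' = obs M \<Longrightarrow> pN M' = pN M \<and> XNn M' = XNn M \<and> YNn M' = YNn M"
  by (auto simp: obs_def fun_eq_iff)

lemma QM:
  assumes st': "standing Ylo Yhi M'" and ob: "obs M' = obs M"
  shows "Y0 M' = aY0 (pN M) (XNn M) (s M' False) \<and> Y1 M' = aY1 (pN M) (XNn M) (YNn M) (s M' False)
    \<and> deltaB M' = adB (pN M) (XNn M) (YNn M) (s M' False) \<and> deltaW M' = adW (pN M) (XNn M) (YNn M) (s M' False)
    \<and> Y0_ER M' = aER (pN M) (XNn M) (YNn M) \<and> Y0_NM M' = aNM (pN M) (XNn M) (YNn M)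
    \<and> Y0_MOB_lo Ylo Yhi M' = alo Ylo Yhi (pN M) (XNn M) (YNn M) \<and> Y0_MOB_hi Ylo Yhi M' = ahi Ylo Yhi (pN M) (XNn M) (YNn M)
    \<and> VarXN M' = aV (pN M) (XNn M) \<and> cb Ylo Yhi (pN M) (XNn M) (YNn M) (s M' False)"
proof -
  have g: "good M'" using standing_good[OF st'] .
  have e: "pN M' = pN M" "XNn M' = XNn M" "YNn M' = YNn M" using obs_eq[OF ob] by auto
  show ?thesis
    using R_Y0[OF g] R_Y1[OF g] R_dB[OF g] R_dW[OF g] R_ER[OF g] R_NM[OF g] R_lo[OF g] R_hi[OF g] R_V[OF g]
      standing_cb[OF st'] unfolding e by blast
qed

lemma EXM:
  assumes st: "standing Ylo Yhi M" and c: "cb Ylo Yhi (pN M) (XNn M) (YNn M) c"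
  shows "\<exists>M'. standing Ylo Yhi M' \<and> obs M' = obs M \<and> s M' False = c"
proof -
  have wf: "wf (pN M) (XNn M) (YNn M)" by (rule standing_wf[OF st])
  let ?M = "MK (pN M) (XNn M) (YNn M) c"
  have "standing Ylo Yhi ?M" by (rule MK_standing[OF wf c])
  moreover have "obs ?M = obs M" by (simp add: obs_def fun_eq_iff MK_pN[OF wf c] MK_X[OF wf c] MK_Y[OF wf c])
  moreover have "s ?M False = c" by (simp add: fun_eq_iff MK_sF[OF wf c])
  ultimately show ?thesis by blast
qed

lemma signlem: assumes "(A::real) > 0" "V > 0" "d * A = t * V"
  shows "(0 \<le> d \<longleftrightarrow> 0 \<le> t) \<and> (d \<le> 0 \<longleftrightarrow> t \<le> 0) \<and> (d = 0 \<longleftrightarrow> t = 0)"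
proof -
  have "0 \<le> d \<longleftrightarrow> 0 \<le> d * A" "d \<le> 0 \<longleftrightarrow> d * A \<le> 0" using assms(1) by (simp_all add: zero_le_mult_iff mult_le_0_iff)
  moreover have "0 \<le> t \<longleftrightarrow> 0 \<le> t * V" "t \<le> 0 \<longleftrightarrow> t * V \<le> 0" using assms(2) by (simp_all add: zero_le_mult_iff mult_le_0_iff)
  ultimately show ?thesis using assms by auto
qed

context
  fixes M :: "('n::finite) outcome measure" and Ylo Yhi :: real
  assumes st: "standing Ylo Yhi M" and Vp: "VarXN M > 0"
begin

abbreviation "pp \<equiv> pN M"
abbreviation "XX \<equiv> XNn M"
abbreviation "YY \<equiv> YNn M"

lemma wfM: "wf pp XX YY" by (rule standing_wf[OF st])
lemma aVp: "aV pp XX > 0" using Vp QM[OF st refl] by simp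

lemma relB: assumes "standing Ylo Yhi M'" "obs M' = obs M"
  shows "(0 \<le> deltaB M' \<longleftrightarrow> Y0 M' \<le> Y0_NM M) \<and> (deltaB M' \<le> 0 \<longleftrightarrow> Y0_NM M \<le> Y0 M') \<and> (deltaB M' = 0 \<longleftrightarrow> Y0 M' = Y0_NM M)"
proof -
  have q: "Y0 M' = aY0 pp XX (s M' False)" "deltaB M' = adB pp XX YY (s M' False)" "cb Ylo Yhi pp XX YY (s M' False)"
    using QM[OF assms] by auto
  have nm: "Y0_NM M = aNM pp XX YY" using QM[OF st refl] by simp
  have "deltaB M' * 1 = (Y0_NM M - Y0 M') * (\<Sum>n\<in>UNIV. pp n * (1 - XX n))"
    using L3[OF wfM q(3)] unfolding q nm by simp
  from signlem[OF _ Bpos[OF wfM] this] show ?thesis by auto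
qed

lemma relW: assumes "standing Ylo Yhi M'" "obs M' = obs M"
  shows "(0 \<le> deltaW M' \<longleftrightarrow> Y0_ER M \<le> Y0 M') \<and> (deltaW M' \<le> 0 \<longleftrightarrow> Y0 M' \<le> Y0_ER M) \<and> (deltaW M' = 0 \<longleftrightarrow> Y0 M' = Y0_ER M)"
proof -
  have q: "Y0 M' = aY0 pp XX (s M' False)" "deltaW M' = adW pp XX YY (s M' False)"
    using QM[OF assms] by auto
  have er: "Y0_ER M = aER pp XX YY" using QM[OF st refl] by simp
  have "deltaW M' * (\<Sum>n\<in>UNIV. pp n * XX n) = (Y0 M' - Y0_ER M) * aV pp XX"
    using L4[OF wfM aVp] unfolding q er by simp
  from signlem[OF Apos[OF wfM] aVp this] show ?thesis by auto
qed

lemma sharp_gen: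
  assumes A: "\<And>M'. standing Ylo Yhi M' \<Longrightarrow> obs M' = obs M \<Longrightarrow> A M' \<longleftrightarrow> Q (Y0 M')"
    and lohi: "\<And>M'. standing Ylo Yhi M' \<Longrightarrow> obs M' = obs M \<Longrightarrow> lo M' = lo M \<and> hi M' = hi M"
    and bnd: "\<And>y. alo Ylo Yhi pp XX YY \<le> y \<Longrightarrow> y \<le> ahi Ylo Yhi pp XX YY \<Longrightarrow> Q y \<Longrightarrow> lo M \<le> y \<and> y \<le> hi M"
    and cov: "\<And>y. lo M \<le> y \<Longrightarrow> y \<le> hi M \<Longrightarrow> alo Ylo Yhi pp XX YY \<le> y \<and> y \<le> ahi Ylo Yhi pp XX YY \<and> Q y"
  shows "sharp_bound Ylo Yhi A lo hi M"
  unfolding sharp_bound_def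
proof (intro conjI allI impI)
  fix M' assume h: "standing Ylo Yhi M' \<and> obs M' = obs M \<and> A M'"
  then have "Q (Y0 M')" using A by blast
  moreover have "Y0 M' = aY0 pp XX (s M' False)" "cb Ylo Yhi pp XX YY (s M' False)" using QM h by blast+
  ultimately have "lo M \<le> Y0 M' \<and> Y0 M' \<le> hi M" using bnd L1[OF wfM] by metis
  then show "lo M' \<le> Y0 M'" "Y0 M' \<le> hi M'" using lohi h by auto
next
  fix y assume y: "lo M \<le> y \<and> y \<le> hi M"
  then have c: "alo Ylo Yhi pp XX YY \<le> y" "y \<le> ahi Ylo Yhi pp XX YY" "Q y" using cov by auto
  have cb0: "cb Ylo Yhi pp XX YY (s M False)" using QM[OF st refl] by blast
  obtain c where cc: "cb Ylo Yhi pp XX YY c" "aY0 pp XX c = y" using L6[OF wfM cb0 c(1,2)] by blast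
  obtain M' where M': "standing Ylo Yhi M'" "obs M' = obs M" "s M' False = c" using EXM[OF st cc(1)] by blast
  have "Y0 M' = y" using QM[OF M'(1,2)] M'(3) cc(2) by simp
  then show "\<exists>M'. standing Ylo Yhi M' \<and> obs M' = obs M \<and> A M' \<and> Y0 M' = y"
    using M' A c(3) by blast
qed

lemma sharp_self: "sharp_bound Ylo Yhi A lo hi M \<Longrightarrow> A M \<Longrightarrow> lo M \<le> Y0 M \<and> Y0 M \<le> hi M"
  unfolding sharp_bound_def using st by blast

lemma NMb: "alo Ylo Yhi pp XX YY \<le> Y0_NM M \<and> Y0_NM M \<le> ahi Ylo Yhi pp XX YY"
  using L2[OF wfM, of Ylo Yhi "s M False"] QM[OF st refl] by auto

lemma loq: "\<And>M'. standing Ylo Yhi M' \<Longrightarrow> obs M' = obs M \<Longrightarrow> Y0_MOB_lo Ylo Yhi M' = alo Ylo Yhi pp XX YY \<and> Y0_MOB_hi Ylo Yhi M' = ahi Ylo Yhi pp XX YY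
    \<and> Y0_NM M' = Y0_NM M \<and> Y0_ER M' = Y0_ER M"
  using QM QM[OF st refl] by metis


lemma S1a: "sharp_bound Ylo Yhi (\<lambda>M'. deltaB M' \<ge> 0) (Y0_MOB_lo Ylo Yhi) Y0_NM M"
  apply (rule sharp_gen[where Q="\<lambda>y. y \<le> Y0_NM M"])
  subgoal for M' using relB[of M'] by auto
  subgoal for M' using loq[of M'] loq[OF st refl] by simp
  subgoal for y using loq[OF st refl] NMb by (auto simp: max.bounded_iff min.bounded_iff)
  subgoal for y using loq[OF st refl] NMb by (auto simp: max.bounded_iff min.bounded_iff)
  done

lemma S1b: "sharp_bound Ylo Yhi (\<lambda>M'. deltaB M' \<le> 0) Y0_NM (Y0_MOB_hi Ylo Yhi) M"
  apply (rule sharp_gen[where Q="\<lambda>y. Y0_NM M \<le> y"])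
  subgoal for M' using relB[of M'] by auto
  subgoal for M' using loq[of M'] loq[OF st refl] by simp
  subgoal for y using loq[OF st refl] NMb by (auto simp: max.bounded_iff min.bounded_iff)
  subgoal for y using loq[OF st refl] NMb by (auto simp: max.bounded_iff min.bounded_iff)
  done

lemma S2a: "sharp_bound Ylo Yhi (\<lambda>M'. deltaW M' \<ge> 0)
       (\<lambda>M'. max (Y0_ER M') (Y0_MOB_lo Ylo Yhi M')) (Y0_MOB_hi Ylo Yhi) M"
  apply (rule sharp_gen[where Q="\<lambda>y. Y0_ER M \<le> y"])
  subgoal for M' using relW[of M'] by auto
  subgoal for M' using loq[of M'] loq[OF st refl] by simp
  subgoal for y using loq[OF st refl] NMb by (auto simp: max.bounded_iff min.bounded_iff)
  subgoal for y using loq[OF st refl] NMb by (auto simp: max.bounded_iff min.bounded_iff)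
  done

lemma S2b: "sharp_bound Ylo Yhi (\<lambda>M'. deltaW M' \<le> 0)
       (Y0_MOB_lo Ylo Yhi) (\<lambda>M'. min (Y0_ER M') (Y0_MOB_hi Ylo Yhi M')) M"
  apply (rule sharp_gen[where Q="\<lambda>y. y \<le> Y0_ER M"])
  subgoal for M' using relW[of M'] by auto
  subgoal for M' using loq[of M'] loq[OF st refl] by simp
  subgoal for y using loq[OF st refl] NMb by (auto simp: max.bounded_iff min.bounded_iff)
  subgoal for y using loq[OF st refl] NMb by (auto simp: max.bounded_iff min.bounded_iff)
  done

lemma S3a: "sharp_bound Ylo Yhi (\<lambda>M'. deltaW M' \<ge> 0 \<and> deltaB M' \<ge> 0)
       (\<lambda>M'. max (Y0_ER M') (Y0_MOB_lo Ylo Yhi M')) Y0_NM M"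
  apply (rule sharp_gen[where Q="\<lambda>y. Y0_ER M \<le> y \<and> y \<le> Y0_NM M"])
  subgoal for M' using relW[of M'] relB[of M'] by auto
  subgoal for M' using loq[of M'] loq[OF st refl] by simp
  subgoal for y using loq[OF st refl] NMb by (auto simp: max.bounded_iff min.bounded_iff)
  subgoal for y using loq[OF st refl] NMb by (auto simp: max.bounded_iff min.bounded_iff)
  done

lemma S3b: "sharp_bound Ylo Yhi (\<lambda>M'. deltaW M' \<le> 0 \<and> deltaB M' \<le> 0)
       Y0_NM (\<lambda>M'. min (Y0_ER M') (Y0_MOB_hi Ylo Yhi M')) M"
  apply (rule sharp_gen[where Q="\<lambda>y. y \<le> Y0_ER M \<and> Y0_NM M \<le> y"])
  subgoal for M' using relW[of M'] relB[of M'] by auto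
  subgoal for M' using loq[of M'] loq[OF st refl] by simp
  subgoal for y using loq[OF st refl] NMb by (auto simp: max.bounded_iff min.bounded_iff)
  subgoal for y using loq[OF st refl] NMb by (auto simp: max.bounded_iff min.bounded_iff)
  done

lemma S4a: "sharp_bound Ylo Yhi (\<lambda>M'. deltaW M' \<ge> 0 \<and> deltaB M' \<le> 0)
       (\<lambda>M'. max (Y0_MOB_lo Ylo Yhi M') (max (Y0_ER M') (Y0_NM M'))) (Y0_MOB_hi Ylo Yhi) M"
  apply (rule sharp_gen[where Q="\<lambda>y. Y0_ER M \<le> y \<and> Y0_NM M \<le> y"])
  subgoal for M' using relW[of M'] relB[of M'] by auto
  subgoal for M' using loq[of M'] loq[OF st refl] by simp
  subgoal for y using loq[OF st refl] NMb by (auto simp: max.bounded_iff min.bounded_iff)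
  subgoal for y using loq[OF st refl] NMb by (auto simp: max.bounded_iff min.bounded_iff)
  done

lemma S4b: "sharp_bound Ylo Yhi (\<lambda>M'. deltaW M' \<le> 0 \<and> deltaB M' \<ge> 0)
       (Y0_MOB_lo Ylo Yhi) (\<lambda>M'. min (Y0_NM M') (min (Y0_ER M') (Y0_MOB_hi Ylo Yhi M'))) M"
  apply (rule sharp_gen[where Q="\<lambda>y. y \<le> Y0_ER M \<and> y \<le> Y0_NM M"])
  subgoal for M' using relW[of M'] relB[of M'] by auto
  subgoal for M' using loq[of M'] loq[OF st refl] by simp
  subgoal for y using loq[OF st refl] NMb by (auto simp: max.bounded_iff min.bounded_iff)
  subgoal for y using loq[OF st refl] NMb by (auto simp: max.bounded_iff min.bounded_iff)
  done

lemma S5: "(deltaW M = 0 \<longrightarrow> Y0 M = Y0_ER M) \<and> (deltaB M = 0 \<longrightarrow> Y0 M = Y0_NM M) \<and>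
     (deltaW M = 0 \<and> deltaB M = 0 \<longrightarrow> Y0 M = Y1 M)"
proof -
  have a: "deltaW M = 0 \<longrightarrow> Y0 M = Y0_ER M" using relW[OF st refl] by simp
  have b: "deltaB M = 0 \<longrightarrow> Y0 M = Y0_NM M" using relB[OF st refl] by simp
  have q: "Y0 M = aY0 pp XX (s M False)" "Y1 M = aY1 pp XX YY (s M False)"
    "Y0_NM M = aNM pp XX YY" "Y0_ER M = aER pp XX YY" using QM[OF st refl] by auto
  have c: "deltaW M = 0 \<and> deltaB M = 0 \<longrightarrow> Y0 M = Y1 M"
    using a b L5[OF wfM aVp, of "s M False"] unfolding q by auto
  show ?thesis using a b c by blast
qed

end

theorem theorem3:
  fixes M :: "('n::finite) outcome measure" and Ylo Yhi :: real
  assumes "Ylo \<le> Yhi"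
    and "standing Ylo Yhi M"
    and "VarXN M > 0"
  shows
    \<comment> \<open>(1)\<close>
    "(deltaB M \<ge> 0 \<longrightarrow> Y0_MOB_lo Ylo Yhi M \<le> Y0 M \<and> Y0 M \<le> Y0_NM M) \<and>
     sharp_bound Ylo Yhi (\<lambda>M'. deltaB M' \<ge> 0) (Y0_MOB_lo Ylo Yhi) Y0_NM M \<and>
     (deltaB M \<le> 0 \<longrightarrow> Y0_NM M \<le> Y0 M \<and> Y0 M \<le> Y0_MOB_hi Ylo Yhi M) \<and>
     sharp_bound Ylo Yhi (\<lambda>M'. deltaB M' \<le> 0) Y0_NM (Y0_MOB_hi Ylo Yhi) M \<and>
     \<comment> \<open>(2)\<close>
     (deltaW M \<ge> 0 \<longrightarrow> max (Y0_ER M) (Y0_MOB_lo Ylo Yhi M) \<le> Y0 M \<and> Y0 M \<le> Y0_MOB_hi Ylo Yhi M) \<and>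
     sharp_bound Ylo Yhi (\<lambda>M'. deltaW M' \<ge> 0)
       (\<lambda>M'. max (Y0_ER M') (Y0_MOB_lo Ylo Yhi M')) (Y0_MOB_hi Ylo Yhi) M \<and>
     (deltaW M \<le> 0 \<longrightarrow> Y0_MOB_lo Ylo Yhi M \<le> Y0 M \<and> Y0 M \<le> min (Y0_ER M) (Y0_MOB_hi Ylo Yhi M)) \<and>
     sharp_bound Ylo Yhi (\<lambda>M'. deltaW M' \<le> 0)
       (Y0_MOB_lo Ylo Yhi) (\<lambda>M'. min (Y0_ER M') (Y0_MOB_hi Ylo Yhi M')) M \<and>
     \<comment> \<open>(3)\<close>
     (deltaW M \<ge> 0 \<and> deltaB M \<ge> 0 \<longrightarrow>
        max (Y0_ER M) (Y0_MOB_lo Ylo Yhi M) \<le> Y0 M \<and> Y0 M \<le> Y0_NM M) \<and>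
     sharp_bound Ylo Yhi (\<lambda>M'. deltaW M' \<ge> 0 \<and> deltaB M' \<ge> 0)
       (\<lambda>M'. max (Y0_ER M') (Y0_MOB_lo Ylo Yhi M')) Y0_NM M \<and>
     (deltaW M \<le> 0 \<and> deltaB M \<le> 0 \<longrightarrow>
        Y0_NM M \<le> Y0 M \<and> Y0 M \<le> min (Y0_ER M) (Y0_MOB_hi Ylo Yhi M)) \<and>
     sharp_bound Ylo Yhi (\<lambda>M'. deltaW M' \<le> 0 \<and> deltaB M' \<le> 0)
       Y0_NM (\<lambda>M'. min (Y0_ER M') (Y0_MOB_hi Ylo Yhi M')) M \<and>
     \<comment> \<open>(4)\<close>
     (deltaW M \<ge> 0 \<and> deltaB M \<le> 0 \<longrightarrow>
        max (Y0_MOB_lo Ylo Yhi M) (max (Y0_ER M) (Y0_NM M)) \<le> Y0 M \<and> Y0 M \<le> Y0_MOB_hi Ylo Yhi M) \<and>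
     sharp_bound Ylo Yhi (\<lambda>M'. deltaW M' \<ge> 0 \<and> deltaB M' \<le> 0)
       (\<lambda>M'. max (Y0_MOB_lo Ylo Yhi M') (max (Y0_ER M') (Y0_NM M'))) (Y0_MOB_hi Ylo Yhi) M \<and>
     (deltaW M \<le> 0 \<and> deltaB M \<ge> 0 \<longrightarrow>
        Y0_MOB_lo Ylo Yhi M \<le> Y0 M \<and> Y0 M \<le> min (Y0_NM M) (min (Y0_ER M) (Y0_MOB_hi Ylo Yhi M))) \<and>
     sharp_bound Ylo Yhi (\<lambda>M'. deltaW M' \<le> 0 \<and> deltaB M' \<ge> 0)
       (Y0_MOB_lo Ylo Yhi) (\<lambda>M'. min (Y0_NM M') (min (Y0_ER M') (Y0_MOB_hi Ylo Yhi M'))) M \<and>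
     \<comment> \<open>(5)\<close>
     (deltaW M = 0 \<longrightarrow> Y0 M = Y0_ER M) \<and>
     (deltaB M = 0 \<longrightarrow> Y0 M = Y0_NM M) \<and>
     (deltaW M = 0 \<and> deltaB M = 0 \<longrightarrow> Y0 M = Y1 M)"
proof -
  note st = assms(2) and Vp = assms(3)
  show ?thesis
    using S1a[OF st Vp] S1b[OF st Vp] S2a[OF st Vp] S2b[OF st Vp] S3a[OF st Vp] S3b[OF st Vp]
      S4a[OF st Vp] S4b[OF st Vp] S5[OF st Vp]
      sharp_self[OF st Vp S1a[OF st Vp]] sharp_self[OF st Vp S1b[OF st Vp]]
      sharp_self[OF st Vp S2a[OF st Vp]] sharp_self[OF st Vp S2b[OF st Vp]]
      sharp_self[OF st Vp S3a[OF st Vp]] sharp_self[OF st Vp S3b[OF st Vp]]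
      sharp_self[OF st Vp S4a[OF st Vp]] sharp_self[OF st Vp S4b[OF st Vp]]
    by blast
qed

end
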